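(* For every finite nonempty set of points $Z\subset\mathbb{S}_1$ and every positive integer $m$ one has $\alpha(mZ)<\alpha((m+5)Z)$.
   Context: Let $P_1\in\mathbb{P}^2(\mathbb{C})$ be a point and $f\colon\mathbb{S}_1\to\mathbb{P}^2$ the blow-up of $\mathbb{P}^2$ at $P_1$, with exceptional curve $E_1=f^{-1}(P_1)$; let $H$ be the pullback of the class of a line. Let $\mathbb{L}_1=3H-E_1=-K_{\mathbb{S}_1}$. For a finite set $Z\subset\mathbb{S}_1$ with ideal sheaf $\mathcal{I}_Z$ and a positive integer $m$, the initial degree is $\alpha(mZ)=\min\{d\ge 0:\ H^0(\mathbb{S}_1,d\mathbb{L}_1\otimes\mathcal{I}_Z^{(m)})\neq 0\}$, i.e. the least $d$ such that some effective divisor $D\in|d\mathbb{L}_1|$ has multiplicity at least $m$ at every point of $Z$. *)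

theory Defs
  imports Complex_Main
begin

(* Concrete model of S_1 = Bl_{P_1} P^2 with P_1 = [0:0:1] (coordinates x0,x1,x2).
   A section of d*L_1 = 3dH - dE_1 is a ternary form F of degree 3d (given by its
   coefficient function c i j l = coefficient of x0^i x1^j x2^l) with multiplicity
   at least d at P_1, i.e. no monomial with i + j < d.  The corresponding divisor is
   D = pi^* C - d E_1 where C = {F = 0}. *)

type_synonym form3 = "nat \<Rightarrow> nat \<Rightarrow> nat \<Rightarrow> complex"

definition in_linsys :: "nat \<Rightarrow> form3 \<Rightarrow> bool" where
  "in_linsys d c \<longleftrightarrow> (\<forall>i j l. c i j l \<noteq> 0 \<longrightarrow> i + j + l = 3 * d \<and> d \<le> i + j)"

definition nonzero_form :: "form3 \<Rightarrow> bool" where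
  "nonzero_form c \<longleftrightarrow> (\<exists>i j l. c i j l \<noteq> 0)"

(* points of S_1, given by representatives:
   Off p  : the point of S_1 over [p0:p1:p2] \<noteq> P_1  (p \<noteq> 0, (p0,p1) \<noteq> (0,0));
   OnE w  : the point of E_1 corresponding to the tangent direction [w0:w1] at P_1. *)
datatype s1pt = Off "complex \<times> complex \<times> complex" | OnE "complex \<times> complex"

fun valid_pt :: "s1pt \<Rightarrow> bool" where
  "valid_pt (Off (p0, p1, p2)) \<longleftrightarrow> (p0, p1) \<noteq> (0, 0)"
| "valid_pt (OnE (a, b)) \<longleftrightarrow> (a, b) \<noteq> (0, 0)"

definition hmon :: "nat \<Rightarrow> nat \<Rightarrow> complex \<Rightarrow> complex" where
  "hmon e a x = of_nat (e choose a) * x ^ (e - a)"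

(* multiplicity of the curve F = 0 (F of degree n) at the point [p] of P^2 is \<ge> m:
   all Hasse derivatives of order < m vanish at p *)
definition mult_ge_P2 :: "nat \<Rightarrow> form3 \<Rightarrow> complex \<times> complex \<times> complex \<Rightarrow> nat \<Rightarrow> bool" where
  "mult_ge_P2 n c p m \<longleftrightarrow>
     (\<forall>a b g. a + b + g < m \<longrightarrow>
        (\<Sum>i\<le>n. \<Sum>j\<le>n. \<Sum>l\<le>n. c i j l * hmon i a (fst p) * hmon j b (fst (snd p))
                                  * hmon l g (snd (snd p))) = 0)"

(* Blow-up charts over the affine chart x2 = 1:
   chart 1: x0 = u, x1 = u t, local equation of D is  sum c i j l u^(i+j-d) t^j;
   chart 2: x0 = s v, x1 = v, local equation of D is  sum c i j l s^i v^(i+j-d).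
   E_1 = {u = 0} resp. {v = 0}; direction [a:b] is (u,t) = (0, b/a) resp. (s,v) = (a/b, 0). *)
definition mult_ge_E :: "nat \<Rightarrow> form3 \<Rightarrow> complex \<times> complex \<Rightarrow> nat \<Rightarrow> bool" where
  "mult_ge_E d c w m \<longleftrightarrow>
     (if fst w \<noteq> 0 then
        (\<forall>a b. a + b < m \<longrightarrow>
          (\<Sum>i\<le>3*d. \<Sum>j\<le>3*d. \<Sum>l\<le>3*d. c i j l * hmon (i + j - d) a 0
                                        * hmon j b (snd w / fst w)) = 0)
      else
        (\<forall>a b. a + b < m \<longrightarrow>
          (\<Sum>i\<le>3*d. \<Sum>j\<le>3*d. \<Sum>l\<le>3*d. c i j l * hmon i a (fst w / snd w)
                                        * hmon (i + j - d) b 0) = 0))"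

fun mult_ge :: "nat \<Rightarrow> form3 \<Rightarrow> s1pt \<Rightarrow> nat \<Rightarrow> bool" where
  "mult_ge d c (Off p) m \<longleftrightarrow> mult_ge_P2 (3 * d) c p m"
| "mult_ge d c (OnE w) m \<longleftrightarrow> mult_ge_E d c w m"

definition alpha_S1 :: "nat \<Rightarrow> s1pt set \<Rightarrow> nat" where
  "alpha_S1 m Z = (LEAST d. \<exists>c. in_linsys d c \<and> nonzero_form c \<and> (\<forall>z\<in>Z. mult_ge d c z m))"

end

theory Submission
  imports Defs
begin


lemma nat_choose_id: "j * (j choose b) = b * (j choose b) + Suc b * (j choose Suc b)"
proof (cases j)
  case 0
  then show ?thesis by (cases b) auto
next
  case (Suc n)
  have e1: "Suc b * (Suc n choose Suc b) = Suc n * (n choose b)" by (rule Suc_times_binomial)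
  have e2: "(Suc n - b) * (Suc n choose b) = Suc n * (n choose b)"
    using binomial_absorb_comp[of "Suc n" b] by simp
  show ?thesis
  proof (cases "b \<le> Suc n")
    case True
    have le: "b * (Suc n choose b) \<le> Suc n * (Suc n choose b)" by (rule mult_le_mono1[OF True])
    have "Suc n * (Suc n choose b) = b * (Suc n choose b) + (Suc n - b) * (Suc n choose b)"
      using le by (simp only: diff_mult_distrib)
    then show ?thesis using Suc e1 e2 by simp
  next
    case False
    then show ?thesis using Suc by (simp add: binomial_eq_0)
  qed
qed

lemma hmon0: "hmon 0 a x = (if a = 0 then 1 else 0)"
  by (cases a) (auto simp: hmon_def)

lemma hmon_at0: "hmon e a 0 = (if e = a then 1 else 0)"
proof -
  consider "e < a" | "e = a" | "e > a" by arith
  then show ?thesis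
    by cases (auto simp: hmon_def)
qed

lemma h1: "of_nat i * hmon (i - 1) a x = of_nat (Suc a) * hmon i (Suc a) x"
proof (cases i)
  case 0
  then show ?thesis by (simp add: hmon_def)
next
  case (Suc n)
  have "of_nat (Suc n) * of_nat (n choose a) = (of_nat (Suc a) * of_nat (Suc n choose Suc a) :: complex)"
    by (metis of_nat_mult Suc_times_binomial)
  then show ?thesis using Suc by (simp add: hmon_def mult.assoc[symmetric])
qed

lemma h2: "of_nat j * hmon j b x = of_nat b * hmon j b x + of_nat (Suc b) * x * hmon j (Suc b) x"
proof -
  have c: "of_nat j * of_nat (j choose b) = (of_nat b * of_nat (j choose b) + of_nat (Suc b) * of_nat (j choose Suc b) :: complex)"
    by (metis nat_choose_id of_nat_mult of_nat_add)
  show ?thesis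
  proof (cases "b < j")
    case True
    then have p: "x ^ (j - b) = x * x ^ (j - Suc b)"
      by (metis Suc_diff_Suc power_Suc)
    show ?thesis unfolding hmon_def p
    proof -
      have "of_nat j * (of_nat (j choose b) * (x * x ^ (j - Suc b))) = (of_nat j * of_nat (j choose b)) * (x * x ^ (j - Suc b))"
        by (simp only: mult.assoc)
      also have "... = (of_nat b * of_nat (j choose b) + of_nat (Suc b) * of_nat (j choose Suc b)) * (x * x ^ (j - Suc b))"
        using c by simp
      also have "... = of_nat b * (of_nat (j choose b) * (x * x ^ (j - Suc b))) + of_nat (Suc b) * x * (of_nat (j choose Suc b) * x ^ (j - Suc b))"
        by (simp only: distrib_left distrib_right mult.assoc mult.left_commute)
      finally show "of_nat j * (of_nat (j choose b) * (x * x ^ (j - Suc b))) = of_nat b * (of_nat (j choose b) * (x * x ^ (j - Suc b))) + of_nat (Suc b) * x * (of_nat (j choose Suc b) * x ^ (j - Suc b))" .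
    qed
  next
    case False
    then have z: "(j choose Suc b) = 0" by simp
    then show ?thesis unfolding hmon_def using c by (simp add: z algebra_simps; auto)
  qed
qed

lemma h4: "hmon (Suc i) a x = x * hmon i a x + (if a = 0 then 0 else hmon i (a - 1) x)"
proof (cases a)
  case 0
  then show ?thesis by (simp add: hmon_def)
next
  case (Suc a')
  show ?thesis
  proof (cases "a' < i")
    case True
    then have p: "x ^ (i - a') = x * x ^ (i - Suc a')"
      by (metis Suc_diff_Suc power_Suc)
    show ?thesis using Suc p by (simp add: hmon_def algebra_simps)
  next
    case False
    then show ?thesis using Suc by (simp add: hmon_def)
  qed
qed



lemma sum_shift: "g 0 = 0 \<Longrightarrow> g (Suc K) = 0 \<Longrightarrow> (\<Sum>l\<le>K. g (Suc l)) = (\<Sum>l\<le>K. (g l :: 'a::comm_monoid_add))"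
proof -
  assume a: "g 0 = 0" "g (Suc K) = 0"
  have "(\<Sum>l\<le>Suc K. g l) = g 0 + (\<Sum>l\<le>K. g (Suc l))" by (rule sum.atMost_Suc_shift)
  moreover have "(\<Sum>l\<le>Suc K. g l) = (\<Sum>l\<le>K. g l) + g (Suc K)" by simp
  ultimately show ?thesis using a by simp
qed

lemma sum_range1: "(\<And>l. l > (K::nat) \<Longrightarrow> f l = 0) \<Longrightarrow> K \<le> K' \<Longrightarrow> (\<Sum>l\<le>K'. f l) = (\<Sum>l\<le>K. (f l :: complex))"
  by (intro sum.mono_neutral_right) (auto simp: not_le)

lemma sum3_range:
  assumes "\<And>i j l. f i j l \<noteq> 0 \<Longrightarrow> i \<le> K \<and> j \<le> K \<and> l \<le> K" "K \<le> (K'::nat)"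
  shows "(\<Sum>i\<le>K'. \<Sum>j\<le>K'. \<Sum>l\<le>K'. f i j l) = (\<Sum>i\<le>K. \<Sum>j\<le>K. \<Sum>l\<le>K. (f i j l :: complex))"
proof -
  have z1: "f i j l = 0" if "i > K \<or> j > K \<or> l > K" for i j l
    using assms(1)[of i j l] that by (cases "f i j l = 0") auto
  have 1: "(\<Sum>l\<le>K'. f i j l) = (\<Sum>l\<le>K. f i j l)" for i j
    by (rule sum_range1) (auto intro: z1 assms(2))
  have 2: "(\<Sum>j\<le>K'. \<Sum>l\<le>K. f i j l) = (\<Sum>j\<le>K. \<Sum>l\<le>K. f i j l)" for i
    by (rule sum_range1) (auto intro!: sum.neutral z1 assms(2))
  have 3: "(\<Sum>i\<le>K'. \<Sum>j\<le>K. \<Sum>l\<le>K. f i j l) = (\<Sum>i\<le>K. \<Sum>j\<le>K. \<Sum>l\<le>K. f i j l)"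
    by (rule sum_range1) (auto intro!: sum.neutral z1 assms(2))
  show ?thesis by (simp add: 1 2 3)
qed

definition supp :: "nat \<Rightarrow> nat \<Rightarrow> form3 \<Rightarrow> bool" where
  "supp N e c \<longleftrightarrow> (\<forall>i j l. c i j l \<noteq> 0 \<longrightarrow> i + j + l = N \<and> e \<le> i + j)"

lemma suppD: "supp N e c \<Longrightarrow> c i j l \<noteq> 0 \<Longrightarrow> i + j + l = N \<and> e \<le> i + j"
  by (auto simp: supp_def)

lemma supp_bound: "supp N e c \<Longrightarrow> c i j l \<noteq> 0 \<Longrightarrow> i \<le> N \<and> j \<le> N \<and> l \<le> N"
  by (drule (1) suppD) auto

lemma supp_mono: "supp N e c \<Longrightarrow> e' \<le> e \<Longrightarrow> supp N e' c"
  unfolding supp_def using le_trans by blast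

definition H3 :: "nat \<Rightarrow> form3 \<Rightarrow> nat \<Rightarrow> nat \<Rightarrow> nat \<Rightarrow> complex \<times> complex \<times> complex \<Rightarrow> complex" where
  "H3 K c a b g p = (\<Sum>i\<le>K. \<Sum>j\<le>K. \<Sum>l\<le>K. c i j l * hmon i a (fst p) * hmon j b (fst (snd p))
                                  * hmon l g (snd (snd p)))"

lemma P2_H3: "mult_ge_P2 n c p m \<longleftrightarrow> (\<forall>a b g. a + b + g < m \<longrightarrow> H3 n c a b g p = 0)"
  by (simp add: mult_ge_P2_def H3_def)

lemma H3_range: "(\<And>i j l. c i j l \<noteq> 0 \<Longrightarrow> i \<le> K \<and> j \<le> K \<and> l \<le> K) \<Longrightarrow> K \<le> K' \<Longrightarrow>
  H3 K' c a b g p = H3 K c a b g p"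
  unfolding H3_def by (rule sum3_range) auto

definition D0 :: "form3 \<Rightarrow> form3" where "D0 c i j l = of_nat (Suc i) * c (Suc i) j l"
definition D1 :: "form3 \<Rightarrow> form3" where "D1 c i j l = of_nat (Suc j) * c i (Suc j) l"
definition D2 :: "form3 \<Rightarrow> form3" where "D2 c i j l = of_nat (Suc l) * c i j (Suc l)"

lemma H3_D0:
  assumes "\<And>j l. c (Suc K) j l = 0"
  shows "H3 K (D0 c) a b g p = of_nat (Suc a) * H3 K c (Suc a) b g p"
proof -
  obtain p0 p1 p2 where p: "p = (p0, p1, p2)" by (cases p) auto
  define G where "G i = (\<Sum>j\<le>K. \<Sum>l\<le>K. of_nat i * c i j l * hmon (i - 1) a p0 * hmon j b p1 * hmon l g p2)" for i
  have "H3 K (D0 c) a b g p = (\<Sum>i\<le>K. G (Suc i))"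
    by (simp add: H3_def G_def D0_def p)
  also have "\<dots> = (\<Sum>i\<le>K. G i)"
    by (rule sum_shift) (auto simp: G_def assms)
  also have "\<dots> = (\<Sum>i\<le>K. \<Sum>j\<le>K. \<Sum>l\<le>K. of_nat (Suc a) * (c i j l * hmon i (Suc a) p0 * hmon j b p1 * hmon l g p2))"
    unfolding G_def
  proof (intro sum.cong refl)
    fix i j l
    show "of_nat i * c i j l * hmon (i - 1) a p0 * hmon j b p1 * hmon l g p2 =
          of_nat (Suc a) * (c i j l * hmon i (Suc a) p0 * hmon j b p1 * hmon l g p2)"
      using h1[of i a p0] by (simp add: mult_ac)
  qed
  also have "\<dots> = of_nat (Suc a) * H3 K c (Suc a) b g p"
    by (simp add: H3_def p sum_distrib_left)
  finally show ?thesis .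
qed



lemma H3_D1:
  assumes "\<And>i l. c i (Suc K) l = 0"
  shows "H3 K (D1 c) a b g p = of_nat (Suc b) * H3 K c a (Suc b) g p"
proof -
  obtain p0 p1 p2 where p: "p = (p0, p1, p2)" by (cases p) auto
  define G where "G i j = (\<Sum>l\<le>K. of_nat j * c i j l * hmon i a p0 * hmon (j - 1) b p1 * hmon l g p2)" for i j
  have "H3 K (D1 c) a b g p = (\<Sum>i\<le>K. \<Sum>j\<le>K. G i (Suc j))"
    by (simp add: H3_def G_def D1_def p mult_ac)
  also have "\<dots> = (\<Sum>i\<le>K. \<Sum>j\<le>K. G i j)"
    by (intro sum.cong refl sum_shift) (auto simp: G_def assms)
  also have "\<dots> = (\<Sum>i\<le>K. \<Sum>j\<le>K. \<Sum>l\<le>K. of_nat (Suc b) * (c i j l * hmon i a p0 * hmon j (Suc b) p1 * hmon l g p2))"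
    unfolding G_def
  proof (intro sum.cong refl)
    fix i j l
    show "of_nat j * c i j l * hmon i a p0 * hmon (j - 1) b p1 * hmon l g p2 =
          of_nat (Suc b) * (c i j l * hmon i a p0 * hmon j (Suc b) p1 * hmon l g p2)"
      using h1[of j b p1] by (simp add: mult_ac)
  qed
  also have "\<dots> = of_nat (Suc b) * H3 K c a (Suc b) g p"
    by (simp add: H3_def p sum_distrib_left)
  finally show ?thesis .
qed

lemma H3_D2:
  assumes "\<And>i j. c i j (Suc K) = 0"
  shows "H3 K (D2 c) a b g p = of_nat (Suc g) * H3 K c a b (Suc g) p"
proof -
  obtain p0 p1 p2 where p: "p = (p0, p1, p2)" by (cases p) auto
  define G where "G i j l = of_nat l * c i j l * hmon i a p0 * hmon j b p1 * hmon (l - 1) g p2" for i j l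
  have "H3 K (D2 c) a b g p = (\<Sum>i\<le>K. \<Sum>j\<le>K. \<Sum>l\<le>K. G i j (Suc l))"
    by (simp add: H3_def G_def D2_def p mult_ac)
  also have "\<dots> = (\<Sum>i\<le>K. \<Sum>j\<le>K. \<Sum>l\<le>K. G i j l)"
    by (intro sum.cong refl sum_shift) (auto simp: G_def assms)
  also have "\<dots> = (\<Sum>i\<le>K. \<Sum>j\<le>K. \<Sum>l\<le>K. of_nat (Suc g) * (c i j l * hmon i a p0 * hmon j b p1 * hmon l (Suc g) p2))"
    unfolding G_def
  proof (intro sum.cong refl)
    fix i j l
    show "of_nat l * c i j l * hmon i a p0 * hmon j b p1 * hmon (l - 1) g p2 =
          of_nat (Suc g) * (c i j l * hmon i a p0 * hmon j b p1 * hmon l (Suc g) p2)"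
      using h1[of l g p2] by (simp add: mult_ac)
  qed
  also have "\<dots> = of_nat (Suc g) * H3 K c a b (Suc g) p"
    by (simp add: H3_def p sum_distrib_left)
  finally show ?thesis .
qed

lemma supp_D0: "supp N e c \<Longrightarrow> supp (N - 1) (e - 1) (D0 c)"
  unfolding supp_def D0_def by (metis (no_types, lifting) add_Suc diff_Suc_1 diff_le_mono mult_eq_0_iff)
lemma supp_D1: "supp N e c \<Longrightarrow> supp (N - 1) (e - 1) (D1 c)"
  unfolding supp_def D1_def
  by (smt (verit) add_Suc add_Suc_right diff_Suc_1 diff_le_mono mult_eq_0_iff)
lemma supp_D2: "supp N e c \<Longrightarrow> supp (N - 1) e (D2 c)"
  unfolding supp_def D2_def
  by (metis (no_types, lifting) add_Suc_right diff_Suc_1 mult_eq_0_iff)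

lemma P2_D0: assumes "supp N e c" "mult_ge_P2 N c p (Suc r)" shows "mult_ge_P2 (N - 1) (D0 c) p r"
proof -
  have b: "\<And>i j l. D0 c i j l \<noteq> 0 \<Longrightarrow> i \<le> N - 1 \<and> j \<le> N - 1 \<and> l \<le> N - 1"
    using supp_bound[OF supp_D0[OF assms(1)]] by blast
  have z: "c (Suc N) j l = 0" for j l using supp_bound[OF assms(1), of "Suc N" j l] by auto
  show ?thesis unfolding P2_H3
  proof (intro allI impI)
    fix a b g assume "a + b + g < r"
    then have "H3 N c (Suc a) b g p = 0" using assms(2) unfolding P2_H3 by simp
    then show "H3 (N - 1) (D0 c) a b g p = 0"
      using H3_range[OF b diff_le_self] H3_D0[of c N, OF z] by simp
  qed
qed

lemma P2_D1: assumes "supp N e c" "mult_ge_P2 N c p (Suc r)" shows "mult_ge_P2 (N - 1) (D1 c) p r"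
proof -
  have b: "\<And>i j l. D1 c i j l \<noteq> 0 \<Longrightarrow> i \<le> N - 1 \<and> j \<le> N - 1 \<and> l \<le> N - 1"
    using supp_bound[OF supp_D1[OF assms(1)]] by blast
  have z: "c i (Suc N) l = 0" for i l using supp_bound[OF assms(1), of i "Suc N" l] by auto
  show ?thesis unfolding P2_H3
  proof (intro allI impI)
    fix a b g assume "a + b + g < r"
    then have "H3 N c a (Suc b) g p = 0" using assms(2) unfolding P2_H3 by simp
    then show "H3 (N - 1) (D1 c) a b g p = 0"
      using H3_range[OF b diff_le_self] H3_D1[of c N, OF z] by simp
  qed
qed

lemma P2_D2: assumes "supp N e c" "mult_ge_P2 N c p (Suc r)" shows "mult_ge_P2 (N - 1) (D2 c) p r"
proof -
  have b: "\<And>i j l. D2 c i j l \<noteq> 0 \<Longrightarrow> i \<le> N - 1 \<and> j \<le> N - 1 \<and> l \<le> N - 1"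
    using supp_bound[OF supp_D2[OF assms(1)]] by blast
  have z: "c i j (Suc N) = 0" for i j using supp_bound[OF assms(1), of i j "Suc N"] by auto
  show ?thesis unfolding P2_H3
  proof (intro allI impI)
    fix a b g assume "a + b + g < r"
    then have "H3 N c a b (Suc g) p = 0" using assms(2) unfolding P2_H3 by simp
    then show "H3 (N - 1) (D2 c) a b g p = 0"
      using H3_range[OF b diff_le_self] H3_D2[of c N, OF z] by simp
  qed
qed



definition E1s :: "nat \<Rightarrow> nat \<Rightarrow> form3 \<Rightarrow> nat \<Rightarrow> nat \<Rightarrow> complex \<Rightarrow> complex" where
  "E1s K e c a b t = (\<Sum>i\<le>K. \<Sum>j\<le>K. \<Sum>l\<le>K. c i j l * hmon (i + j - e) a 0 * hmon j b t)"

definition E1 :: "nat \<Rightarrow> nat \<Rightarrow> form3 \<Rightarrow> complex \<Rightarrow> nat \<Rightarrow> bool" where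
  "E1 K e c t r \<longleftrightarrow> (\<forall>a b. a + b < r \<longrightarrow> E1s K e c a b t = 0)"

lemma E1s_range: "(\<And>i j l. c i j l \<noteq> 0 \<Longrightarrow> i \<le> K \<and> j \<le> K \<and> l \<le> K) \<Longrightarrow> K \<le> K' \<Longrightarrow>
  E1s K' e c a b t = E1s K e c a b t"
  unfolding E1s_def by (rule sum3_range) auto

lemma h2c: "of_nat b * (C * hmon j b t) + of_nat (Suc b) * t * (C * hmon j (Suc b) t) = of_nat j * (C * hmon j b t)"
proof -
  have "of_nat j * (C * hmon j b t) = C * (of_nat j * hmon j b t)" by (simp add: mult_ac)
  also have "\<dots> = C * (of_nat b * hmon j b t + of_nat (Suc b) * t * hmon j (Suc b) t)" by (simp only: h2)
  also have "\<dots> = of_nat b * (C * hmon j b t) + of_nat (Suc b) * t * (C * hmon j (Suc b) t)"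
    by (simp add: algebra_simps)
  finally show ?thesis by simp
qed

lemma E1s_D0:
  assumes s: "supp N e c" and e: "1 \<le> e"
  shows "E1s N (e - 1) (D0 c) a b t = of_nat (a + e) * E1s N e c a b t
           - (of_nat b * E1s N e c a b t + of_nat (Suc b) * t * E1s N e c a (Suc b) t)"
proof -
  define G where "G i = (\<Sum>j\<le>N. \<Sum>l\<le>N. of_nat i * c i j l * hmon (i - 1 + j - (e - 1)) a 0 * hmon j b t)" for i
  define T where "T i j l b' = c i j l * hmon (i + j - e) a 0 * hmon j b' t" for i j l b'
  have z: "c (Suc N) j l = 0" for j l using supp_bound[OF s, of "Suc N" j l] by auto
  have "E1s N (e - 1) (D0 c) a b t = (\<Sum>i\<le>N. G (Suc i))"
    by (simp add: E1s_def G_def D0_def)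
  also have "\<dots> = (\<Sum>i\<le>N. G i)"
    by (rule sum_shift) (auto simp: G_def z)
  also have "\<dots> = (\<Sum>i\<le>N. \<Sum>j\<le>N. \<Sum>l\<le>N. of_nat (a + e) * T i j l b - (of_nat b * T i j l b + of_nat (Suc b) * t * T i j l (Suc b)))"
    unfolding G_def
  proof (intro sum.cong refl)
    fix i j l
    have P: "of_nat i * c i j l * hmon (i - 1 + j - (e - 1)) a 0 * hmon j b t = (of_nat (a + e) - of_nat j) * T i j l b"
    proof (cases "c i j l = 0")
      case True then show ?thesis by (simp add: T_def)
    next
      case False
      then have ej: "e \<le> i + j" using suppD[OF s] by blast
      show ?thesis
      proof (cases "i = 0")
        case True
        show ?thesis
        proof (cases "j - e = a")
          case True
          then have "j = a + e" using ej \<open>i = 0\<close> by arith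
          then show ?thesis using \<open>i = 0\<close> by (simp add: T_def)
        next
          case False
          then show ?thesis using \<open>i = 0\<close> by (simp add: T_def hmon_at0)
        qed
      next
        case False
        then have q: "i - 1 + j - (e - 1) = i + j - e" using e by arith
        show ?thesis
        proof (cases "i + j - e = a")
          case True
          then have "i + j = a + e" using ej by arith
          then have "(of_nat (a + e) - of_nat j :: complex) = of_nat i"
            by (metis add_diff_cancel_right' of_nat_add)
          then show ?thesis using q by (simp add: T_def)
        next
          case False
          then show ?thesis using q by (simp add: T_def hmon_at0)
        qed
      qed
    qed
    show "of_nat i * c i j l * hmon (i - 1 + j - (e - 1)) a 0 * hmon j b t =
      of_nat (a + e) * T i j l b - (of_nat b * T i j l b + of_nat (Suc b) * t * T i j l (Suc b))"
      unfolding P unfolding T_def h2c by (simp add: algebra_simps)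
  qed
  also have "\<dots> = of_nat (a + e) * E1s N e c a b t
           - (of_nat b * E1s N e c a b t + of_nat (Suc b) * t * E1s N e c a (Suc b) t)"
    by (simp add: E1s_def T_def sum_subtractf sum.distrib sum_distrib_left)
  finally show ?thesis .
qed

lemma E1s_D0z:
  assumes s: "supp N 0 c"
  shows "E1s N 0 (D0 c) a b t = of_nat (Suc a) * E1s N 0 c (Suc a) b t
           - (of_nat b * E1s N 0 c (Suc a) b t + of_nat (Suc b) * t * E1s N 0 c (Suc a) (Suc b) t)"
proof -
  define G where "G i = (\<Sum>j\<le>N. \<Sum>l\<le>N. of_nat i * c i j l * hmon (i - 1 + j) a 0 * hmon j b t)" for i
  define T where "T i j l b' = c i j l * hmon (i + j) (Suc a) 0 * hmon j b' t" for i j l b'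
  have z: "c (Suc N) j l = 0" for j l using supp_bound[OF s, of "Suc N" j l] by auto
  have "E1s N 0 (D0 c) a b t = (\<Sum>i\<le>N. G (Suc i))"
    by (simp add: E1s_def G_def D0_def)
  also have "\<dots> = (\<Sum>i\<le>N. G i)"
    by (rule sum_shift) (auto simp: G_def z)
  also have "\<dots> = (\<Sum>i\<le>N. \<Sum>j\<le>N. \<Sum>l\<le>N. of_nat (Suc a) * T i j l b - (of_nat b * T i j l b + of_nat (Suc b) * t * T i j l (Suc b)))"
    unfolding G_def
  proof (intro sum.cong refl)
    fix i j l
    have P: "of_nat i * c i j l * hmon (i - 1 + j) a 0 * hmon j b t = (of_nat (Suc a) - of_nat j) * T i j l b"
    proof (cases "i = 0")
      case True
      show ?thesis
      proof (cases "j = Suc a")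
        case True
        then show ?thesis using \<open>i = 0\<close> by (simp add: T_def)
      next
        case False
        then show ?thesis using \<open>i = 0\<close> by (simp add: T_def hmon_at0)
      qed
    next
      case False
      show ?thesis
      proof (cases "i + j = Suc a")
        case True
        then have "(of_nat (Suc a) - of_nat j :: complex) = of_nat i"
          by (metis add_diff_cancel_right' of_nat_add)
        moreover have "i - 1 + j = a" using True False by arith
        ultimately show ?thesis using True by (simp add: T_def hmon_at0)
      next
        case False
        then have "i - 1 + j \<noteq> a" using \<open>i \<noteq> 0\<close> by arith
        then show ?thesis using False by (simp add: T_def hmon_at0)
      qed
    qed
    show "of_nat i * c i j l * hmon (i - 1 + j) a 0 * hmon j b t =
      of_nat (Suc a) * T i j l b - (of_nat b * T i j l b + of_nat (Suc b) * t * T i j l (Suc b))"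
      unfolding P unfolding T_def h2c by (simp add: algebra_simps)
  qed
  also have "\<dots> = of_nat (Suc a) * E1s N 0 c (Suc a) b t
           - (of_nat b * E1s N 0 c (Suc a) b t + of_nat (Suc b) * t * E1s N 0 c (Suc a) (Suc b) t)"
    by (simp add: E1s_def T_def sum_subtractf sum.distrib sum_distrib_left)
  finally show ?thesis .
qed

lemma E1s_D1:
  assumes s: "supp N e c" and e: "1 \<le> e"
  shows "E1s N (e - 1) (D1 c) a b t = of_nat (Suc b) * E1s N e c a (Suc b) t"
proof -
  define G where "G i j = (\<Sum>l\<le>N. of_nat j * c i j l * hmon (i + (j - 1) - (e - 1)) a 0 * hmon (j - 1) b t)" for i j
  have z: "c i (Suc N) l = 0" for i l using supp_bound[OF s, of i "Suc N" l] by auto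
  have "E1s N (e - 1) (D1 c) a b t = (\<Sum>i\<le>N. \<Sum>j\<le>N. G i (Suc j))"
    by (simp add: E1s_def G_def D1_def mult_ac)
  also have "\<dots> = (\<Sum>i\<le>N. \<Sum>j\<le>N. G i j)"
    by (intro sum.cong refl sum_shift) (auto simp: G_def z)
  also have "\<dots> = (\<Sum>i\<le>N. \<Sum>j\<le>N. \<Sum>l\<le>N. of_nat (Suc b) * (c i j l * hmon (i + j - e) a 0 * hmon j (Suc b) t))"
    unfolding G_def
  proof (intro sum.cong refl)
    fix i j l
    show "of_nat j * c i j l * hmon (i + (j - 1) - (e - 1)) a 0 * hmon (j - 1) b t =
      of_nat (Suc b) * (c i j l * hmon (i + j - e) a 0 * hmon j (Suc b) t)"
    proof (cases "j = 0")
      case True then show ?thesis by (simp add: hmon0)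
    next
      case False
      then have q: "i + (j - 1) - (e - 1) = i + j - e" using e by arith
      show ?thesis unfolding q using h1[of j b t] by (simp add: mult_ac)
    qed
  qed
  also have "\<dots> = of_nat (Suc b) * E1s N e c a (Suc b) t"
    by (simp add: E1s_def sum_distrib_left)
  finally show ?thesis .
qed

lemma E1s_D1z:
  assumes s: "supp N 0 c"
  shows "E1s N 0 (D1 c) a b t = of_nat (Suc b) * E1s N 0 c (Suc a) (Suc b) t"
proof -
  define G where "G i j = (\<Sum>l\<le>N. of_nat j * c i j l * hmon (i + (j - 1)) a 0 * hmon (j - 1) b t)" for i j
  have z: "c i (Suc N) l = 0" for i l using supp_bound[OF s, of i "Suc N" l] by auto
  have "E1s N 0 (D1 c) a b t = (\<Sum>i\<le>N. \<Sum>j\<le>N. G i (Suc j))"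
    by (simp add: E1s_def G_def D1_def mult_ac)
  also have "\<dots> = (\<Sum>i\<le>N. \<Sum>j\<le>N. G i j)"
    by (intro sum.cong refl sum_shift) (auto simp: G_def z)
  also have "\<dots> = (\<Sum>i\<le>N. \<Sum>j\<le>N. \<Sum>l\<le>N. of_nat (Suc b) * (c i j l * hmon (i + j) (Suc a) 0 * hmon j (Suc b) t))"
    unfolding G_def
  proof (intro sum.cong refl)
    fix i j l
    show "of_nat j * c i j l * hmon (i + (j - 1)) a 0 * hmon (j - 1) b t =
      of_nat (Suc b) * (c i j l * hmon (i + j) (Suc a) 0 * hmon j (Suc b) t)"
    proof (cases "j = 0")
      case True then show ?thesis by (simp add: hmon0)
    next
      case False
      then have q: "hmon (i + (j - 1)) a 0 = hmon (i + j) (Suc a) 0" by (simp add: hmon_at0) arith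
      show ?thesis unfolding q using h1[of j b t] by (simp add: mult_ac)
    qed
  qed
  also have "\<dots> = of_nat (Suc b) * E1s N 0 c (Suc a) (Suc b) t"
    by (simp add: E1s_def sum_distrib_left)
  finally show ?thesis .
qed

lemma E1s_D2:
  assumes s: "supp N e c"
  shows "E1s N e (D2 c) a b t = of_nat (N - e - a) * E1s N e c a b t"
proof -
  define G where "G i j l = of_nat l * c i j l * hmon (i + j - e) a 0 * hmon j b t" for i j l
  have z: "c i j (Suc N) = 0" for i j using supp_bound[OF s, of i j "Suc N"] by auto
  have "E1s N e (D2 c) a b t = (\<Sum>i\<le>N. \<Sum>j\<le>N. \<Sum>l\<le>N. G i j (Suc l))"
    by (simp add: E1s_def G_def D2_def mult_ac)
  also have "\<dots> = (\<Sum>i\<le>N. \<Sum>j\<le>N. \<Sum>l\<le>N. G i j l)"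
    by (intro sum.cong refl sum_shift) (auto simp: G_def z)
  also have "\<dots> = (\<Sum>i\<le>N. \<Sum>j\<le>N. \<Sum>l\<le>N. of_nat (N - e - a) * (c i j l * hmon (i + j - e) a 0 * hmon j b t))"
    unfolding G_def
  proof (intro sum.cong refl)
    fix i j l
    show "of_nat l * c i j l * hmon (i + j - e) a 0 * hmon j b t =
      of_nat (N - e - a) * (c i j l * hmon (i + j - e) a 0 * hmon j b t)"
    proof (cases "c i j l = 0 \<or> i + j - e \<noteq> a")
      case True then show ?thesis by (auto simp: hmon_at0)
    next
      case False
      then have "l = N - e - a" using suppD[OF s, of i j l] by arith
      then show ?thesis by simp
    qed
  qed
  also have "\<dots> = of_nat (N - e - a) * E1s N e c a b t"
    by (simp add: E1s_def sum_distrib_left)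
  finally show ?thesis .
qed

lemma E1s_raise:
  assumes s: "supp N (Suc e) c"
  shows "E1s N (Suc e) c a b t = E1s N e c (Suc a) b t"
  unfolding E1s_def
proof (intro sum.cong refl)
  fix i j l
  show "c i j l * hmon (i + j - Suc e) a 0 * hmon j b t = c i j l * hmon (i + j - e) (Suc a) 0 * hmon j b t"
  proof (cases "c i j l = 0")
    case False
    then have "Suc e \<le> i + j" using suppD[OF s] by blast
    then have "hmon (i + j - Suc e) a 0 = hmon (i + j - e) (Suc a) 0" by (simp add: hmon_at0) arith
    then show ?thesis by simp
  qed simp
qed

lemma E1s_lower:
  assumes s: "supp N e c" and e: "1 \<le> e"
  shows "E1s N (e - 1) c a b t = (if a = 0 then 0 else E1s N e c (a - 1) b t)"
proof (cases a)
  case 0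
  have t: "c i j l * hmon (i + j - (e - 1)) 0 0 * hmon j b t = 0" for i j l
  proof (cases "c i j l = 0")
    case False
    then have "e \<le> i + j" using suppD[OF s] by blast
    then show ?thesis using e by (simp add: hmon_at0)
  qed simp
  show ?thesis unfolding E1s_def 0 t by simp
next
  case (Suc a')
  have s': "supp N (Suc (e - 1)) c" using s e by simp
  show ?thesis using E1s_raise[OF s', of a' b t] e Suc by simp
qed



lemma D0_bound: "supp N e c \<Longrightarrow> D0 c i j l \<noteq> 0 \<Longrightarrow> i \<le> N - 1 \<and> j \<le> N - 1 \<and> l \<le> N - 1"
  using supp_bound[OF supp_D0] by blast
lemma D1_bound: "supp N e c \<Longrightarrow> D1 c i j l \<noteq> 0 \<Longrightarrow> i \<le> N - 1 \<and> j \<le> N - 1 \<and> l \<le> N - 1"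
  using supp_bound[OF supp_D1] by blast
lemma D2_bound: "supp N e c \<Longrightarrow> D2 c i j l \<noteq> 0 \<Longrightarrow> i \<le> N - 1 \<and> j \<le> N - 1 \<and> l \<le> N - 1"
  using supp_bound[OF supp_D2] by blast

lemma E1_mono: "E1 N e c t r \<Longrightarrow> r' \<le> r \<Longrightarrow> E1 N e c t r'"
  by (auto simp: E1_def)

lemma E1_D0:
  assumes s: "supp N e c" and h: "E1 N e c t (q - e)"
  shows "E1 (N - 1) (e - 1) (D0 c) t (q - 2 - (e - 1))"
  unfolding E1_def
proof (intro allI impI)
  fix a b assume ab: "a + b < q - 2 - (e - 1)"
  have r: "E1s (N - 1) (e - 1) (D0 c) a b t = E1s N (e - 1) (D0 c) a b t"
    by (rule E1s_range[symmetric]) (auto dest: D0_bound[OF s])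
  show "E1s (N - 1) (e - 1) (D0 c) a b t = 0"
  proof (cases "e = 0")
    case True
    have s0: "supp N 0 c" using s True by simp
    have "E1s N 0 c (Suc a) b t = 0" "E1s N 0 c (Suc a) (Suc b) t = 0"
      using h ab True unfolding E1_def by auto
    then show ?thesis using r E1s_D0z[OF s0, of a b t] True by simp
  next
    case False
    then have e1: "1 \<le> e" by simp
    have "E1s N e c a b t = 0" "E1s N e c a (Suc b) t = 0"
      using h ab e1 unfolding E1_def by auto
    then show ?thesis using r E1s_D0[OF s e1, of a b t] by simp
  qed
qed

lemma E1_D1:
  assumes s: "supp N e c" and h: "E1 N e c t (q - e)"
  shows "E1 (N - 1) (e - 1) (D1 c) t (q - 2 - (e - 1))"
  unfolding E1_def
proof (intro allI impI)
  fix a b assume ab: "a + b < q - 2 - (e - 1)"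
  have r: "E1s (N - 1) (e - 1) (D1 c) a b t = E1s N (e - 1) (D1 c) a b t"
    by (rule E1s_range[symmetric]) (auto dest: D1_bound[OF s])
  show "E1s (N - 1) (e - 1) (D1 c) a b t = 0"
  proof (cases "e = 0")
    case True
    have s0: "supp N 0 c" using s True by simp
    have "E1s N 0 c (Suc a) (Suc b) t = 0"
      using h ab True unfolding E1_def by auto
    then show ?thesis using r E1s_D1z[OF s0, of a b t] True by simp
  next
    case False
    then have e1: "1 \<le> e" by simp
    have "E1s N e c a (Suc b) t = 0"
      using h ab e1 unfolding E1_def by auto
    then show ?thesis using r E1s_D1[OF s e1, of a b t] by simp
  qed
qed

lemma E1_D2:
  assumes s: "supp N e c" and h: "E1 N e c t r"
  shows "E1 (N - 1) e (D2 c) t r"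
  unfolding E1_def
proof (intro allI impI)
  fix a b assume ab: "a + b < r"
  have r: "E1s (N - 1) e (D2 c) a b t = E1s N e (D2 c) a b t"
    by (rule E1s_range[symmetric]) (auto dest: D2_bound[OF s])
  have "E1s N e c a b t = 0" using h ab unfolding E1_def by auto
  then show "E1s (N - 1) e (D2 c) a b t = 0" using r E1s_D2[OF s, of a b t] by simp
qed

lemma E1_raise:
  assumes s: "supp N (Suc e) c" and h: "E1 N e c t r"
  shows "E1 N (Suc e) c t (r - 1)"
  unfolding E1_def
proof (intro allI impI)
  fix a b assume ab: "a + b < r - 1"
  have "E1s N e c (Suc a) b t = 0" using h ab unfolding E1_def by auto
  then show "E1s N (Suc e) c a b t = 0" using E1s_raise[OF s] by simp
qed

lemma E1_lower:
  assumes s: "supp N e c" and e: "1 \<le> e" and h: "E1 N e c t r"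
  shows "E1 N (e - 1) c t r"
  unfolding E1_def
proof (intro allI impI)
  fix a b assume ab: "a + b < r"
  show "E1s N (e - 1) c a b t = 0"
  proof (cases a)
    case (Suc a')
    have "E1s N e c a' b t = 0" using h ab Suc unfolding E1_def by auto
    then show ?thesis using E1s_lower[OF s e] Suc by simp
  next
    case 0 then show ?thesis using E1s_lower[OF s e, of 0 b t] by simp
  qed
qed

definition swp :: "form3 \<Rightarrow> form3" where "swp c i j l = c j i l"

lemma swp_D0: "swp (D0 c) = D1 (swp c)" by (auto simp: fun_eq_iff swp_def D0_def D1_def)
lemma swp_D1: "swp (D1 c) = D0 (swp c)" by (auto simp: fun_eq_iff swp_def D0_def D1_def)
lemma swp_D2: "swp (D2 c) = D2 (swp c)" by (auto simp: fun_eq_iff swp_def D2_def)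
lemma supp_swp: "supp N e (swp c) = supp N e c"
  unfolding supp_def swp_def by (metis add.commute)

lemma E1s_swp: "E1s K e (swp c) a b s = (\<Sum>i\<le>K. \<Sum>j\<le>K. \<Sum>l\<le>K. c i j l * hmon i b s * hmon (i + j - e) a 0)"
proof -
  have "E1s K e (swp c) a b s = (\<Sum>i\<le>K. \<Sum>j\<le>K. \<Sum>l\<le>K. c j i l * hmon (i + j - e) a 0 * hmon j b s)"
    by (simp add: E1s_def swp_def)
  also have "\<dots> = (\<Sum>j\<le>K. \<Sum>i\<le>K. \<Sum>l\<le>K. c j i l * hmon (i + j - e) a 0 * hmon j b s)"
    by (rule sum.swap)
  also have "\<dots> = (\<Sum>i\<le>K. \<Sum>j\<le>K. \<Sum>l\<le>K. c i j l * hmon i b s * hmon (i + j - e) a 0)"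
    by (simp add: add.commute mult_ac)
  finally show ?thesis .
qed

definition Econd :: "nat \<Rightarrow> nat \<Rightarrow> form3 \<Rightarrow> complex \<times> complex \<Rightarrow> nat \<Rightarrow> bool" where
  "Econd N e c w r \<longleftrightarrow> (if fst w \<noteq> 0 then E1 N e c (snd w / fst w) r else E1 N e (swp c) (fst w / snd w) r)"

lemma E_equiv: "mult_ge_E d c w r \<longleftrightarrow> Econd (3 * d) d c w r"
proof (cases "fst w \<noteq> 0")
  case True
  then show ?thesis by (simp add: mult_ge_E_def Econd_def E1_def E1s_def)
next
  case False
  have "(\<forall>a b. a + b < r \<longrightarrow> (\<Sum>i\<le>3*d. \<Sum>j\<le>3*d. \<Sum>l\<le>3*d. c i j l * hmon i a (fst w / snd w)
                                        * hmon (i + j - d) b 0) = 0)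
      \<longleftrightarrow> (\<forall>a b. a + b < r \<longrightarrow> E1s (3 * d) d (swp c) a b (fst w / snd w) = 0)"
    unfolding E1s_swp
  proof (intro iffI allI impI)
    fix a b
    assume H: "\<forall>a b. a + b < r \<longrightarrow> (\<Sum>i\<le>3*d. \<Sum>j\<le>3*d. \<Sum>l\<le>3*d. c i j l * hmon i a (fst w / snd w)
                                        * hmon (i + j - d) b 0) = 0" and ab: "a + b < r"
    from ab have "b + a < r" by simp
    then show "(\<Sum>i\<le>3*d. \<Sum>j\<le>3*d. \<Sum>l\<le>3*d. c i j l * hmon i b (fst w / snd w) * hmon (i + j - d) a 0) = 0"
      using H by blast
  next
    fix a b
    assume H: "\<forall>a b. a + b < r \<longrightarrow> (\<Sum>i\<le>3*d. \<Sum>j\<le>3*d. \<Sum>l\<le>3*d. c i j l * hmon i b (fst w / snd w)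
                                        * hmon (i + j - d) a 0) = 0" and ab: "a + b < r"
    from ab have "b + a < r" by simp
    then show "(\<Sum>i\<le>3*d. \<Sum>j\<le>3*d. \<Sum>l\<le>3*d. c i j l * hmon i a (fst w / snd w) * hmon (i + j - d) b 0) = 0"
      using H by blast
  qed
  then show ?thesis using False by (simp add: mult_ge_E_def Econd_def E1_def)
qed

lemma Econd_mono: "Econd N e c w r \<Longrightarrow> r' \<le> r \<Longrightarrow> Econd N e c w r'"
  by (auto simp: Econd_def intro: E1_mono split: if_splits)

lemma P2_mono: "mult_ge_P2 n c p r \<Longrightarrow> r' \<le> r \<Longrightarrow> mult_ge_P2 n c p r'"
  by (auto simp: mult_ge_P2_def)

definition St :: "s1pt set \<Rightarrow> nat \<Rightarrow> nat \<Rightarrow> nat \<Rightarrow> nat \<Rightarrow> form3 \<Rightarrow> bool" where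
  "St Z N e rP q c \<longleftrightarrow> supp N e c \<and>
     (\<forall>z\<in>Z. case z of Off p \<Rightarrow> mult_ge_P2 N c p rP | OnE w \<Rightarrow> Econd N e c w (q - e))"

lemma St_empty: "St {} N e rP q c \<longleftrightarrow> supp N e c" by (simp add: St_def)

lemma St_D0: assumes "St Z N e (Suc rP) q c" shows "St Z (N - 1) (e - 1) rP (q - 2) (D0 c)"
proof -
  have s: "supp N e c" using assms by (simp add: St_def)
  have ss: "supp N e (swp c)" using s by (simp add: supp_swp)
  show ?thesis unfolding St_def
  proof (intro conjI ballI)
    show "supp (N - 1) (e - 1) (D0 c)" by (rule supp_D0[OF s])
    fix z assume z: "z \<in> Z"
    show "case z of Off p \<Rightarrow> mult_ge_P2 (N - 1) (D0 c) p rP | OnE w \<Rightarrow> Econd (N - 1) (e - 1) (D0 c) w (q - 2 - (e - 1))"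
    proof (cases z)
      case (Off p)
      have "mult_ge_P2 N c p (Suc rP)" using assms z Off unfolding St_def by fastforce
      then show ?thesis using Off P2_D0[OF s] by simp
    next
      case (OnE w)
      then have h: "Econd N e c w (q - e)" using assms z by (auto simp: St_def)
      show ?thesis using OnE h E1_D0[OF s] E1_D1[OF ss]
        by (auto simp: Econd_def swp_D0 split: if_splits)
    qed
  qed
qed

lemma St_D1: assumes "St Z N e (Suc rP) q c" shows "St Z (N - 1) (e - 1) rP (q - 2) (D1 c)"
proof -
  have s: "supp N e c" using assms by (simp add: St_def)
  have ss: "supp N e (swp c)" using s by (simp add: supp_swp)
  show ?thesis unfolding St_def
  proof (intro conjI ballI)
    show "supp (N - 1) (e - 1) (D1 c)" by (rule supp_D1[OF s])
    fix z assume z: "z \<in> Z"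
    show "case z of Off p \<Rightarrow> mult_ge_P2 (N - 1) (D1 c) p rP | OnE w \<Rightarrow> Econd (N - 1) (e - 1) (D1 c) w (q - 2 - (e - 1))"
    proof (cases z)
      case (Off p)
      have "mult_ge_P2 N c p (Suc rP)" using assms z Off unfolding St_def by fastforce
      then show ?thesis using Off P2_D1[OF s] by simp
    next
      case (OnE w)
      then have h: "Econd N e c w (q - e)" using assms z by (auto simp: St_def)
      show ?thesis using OnE h E1_D1[OF s] E1_D0[OF ss]
        by (auto simp: Econd_def swp_D1 split: if_splits)
    qed
  qed
qed

lemma St_D2: assumes "St Z N e (Suc rP) q c" shows "St Z (N - 1) e rP q (D2 c)"
proof -
  have s: "supp N e c" using assms by (simp add: St_def)
  have ss: "supp N e (swp c)" using s by (simp add: supp_swp)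
  show ?thesis unfolding St_def
  proof (intro conjI ballI)
    show "supp (N - 1) e (D2 c)" by (rule supp_D2[OF s])
    fix z assume z: "z \<in> Z"
    show "case z of Off p \<Rightarrow> mult_ge_P2 (N - 1) (D2 c) p rP | OnE w \<Rightarrow> Econd (N - 1) e (D2 c) w (q - e)"
    proof (cases z)
      case (Off p)
      have "mult_ge_P2 N c p (Suc rP)" using assms z Off unfolding St_def by fastforce
      then show ?thesis using Off P2_D2[OF s] by simp
    next
      case (OnE w)
      then have h: "Econd N e c w (q - e)" using assms z by (auto simp: St_def)
      show ?thesis using OnE h E1_D2[OF s] E1_D2[OF ss]
        by (auto simp: Econd_def swp_D2 split: if_splits)
    qed
  qed
qed

lemma St_raise: assumes "St Z N e rP q c" "supp N (Suc e) c" shows "St Z N (Suc e) rP q c"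
proof -
  have ss: "supp N (Suc e) (swp c)" using assms(2) by (simp add: supp_swp)
  show ?thesis unfolding St_def
  proof (intro conjI ballI)
    show "supp N (Suc e) c" by fact
    fix z assume z: "z \<in> Z"
    show "case z of Off p \<Rightarrow> mult_ge_P2 N c p rP | OnE w \<Rightarrow> Econd N (Suc e) c w (q - Suc e)"
    proof (cases z)
      case (Off p)
      then show ?thesis using assms z by (auto simp: St_def)
    next
      case (OnE w)
      then have h: "Econd N e c w (q - e)" using assms z by (auto simp: St_def)
      have eq: "q - e - 1 = q - Suc e" by simp
      have "Econd N (Suc e) c w (q - Suc e)"
        using h E1_raise[OF assms(2), where r="q - e"] E1_raise[OF ss, where r="q - e"]
        unfolding eq by (auto simp: Econd_def split: if_splits)
      then show ?thesis using OnE by simp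
    qed
  qed
qed

lemma St_lower: assumes "St Z N e rP q c" "1 \<le> e" shows "St Z N (e - 1) rP (q - 1) c"
proof -
  have s: "supp N e c" using assms by (simp add: St_def)
  have ss: "supp N e (swp c)" using s by (simp add: supp_swp)
  show ?thesis unfolding St_def
  proof (intro conjI ballI)
    show "supp N (e - 1) c" using supp_mono[OF s] by simp
    fix z assume z: "z \<in> Z"
    show "case z of Off p \<Rightarrow> mult_ge_P2 N c p rP | OnE w \<Rightarrow> Econd N (e - 1) c w (q - 1 - (e - 1))"
    proof (cases z)
      case (Off p)
      then show ?thesis using assms z by (auto simp: St_def)
    next
      case (OnE w)
      then have h: "Econd N e c w (q - e)" using assms z by (auto simp: St_def)
      have "Econd N (e - 1) c w (q - e)"
        using h E1_lower[OF s assms(2)] E1_lower[OF ss assms(2)] by (auto simp: Econd_def split: if_splits)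
      then show ?thesis using OnE Econd_mono by auto
    qed
  qed
qed

lemma St_mono: assumes "St Z N e rP q c" "rP' \<le> rP" "q' \<le> q" shows "St Z N e rP' q' c"
  unfolding St_def
proof (intro conjI ballI)
  show "supp N e c" using assms(1) by (simp add: St_def)
  fix z assume z: "z \<in> Z"
  then have h: "case z of Off p \<Rightarrow> mult_ge_P2 N c p rP | OnE w \<Rightarrow> Econd N e c w (q - e)"
    using assms(1) by (simp add: St_def)
  show "case z of Off p \<Rightarrow> mult_ge_P2 N c p rP' | OnE w \<Rightarrow> Econd N e c w (q' - e)"
  proof (cases z)
    case (Off p) then show ?thesis using h P2_mono assms(2) by auto
  next
    case (OnE w) then show ?thesis using h Econd_mono assms(3) by (auto simp: diff_le_mono)
  qed
qed



lemma D2pow_St: "St Z N e (rP + k) q c \<Longrightarrow> St Z (N - k) e rP q ((D2 ^^ k) c)"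
proof (induction k arbitrary: rP)
  case 0 then show ?case by simp
next
  case (Suc k)
  have "St Z N e (Suc rP + k) q c" using Suc.prems by simp
  then have "St Z (N - k) e (Suc rP) q ((D2 ^^ k) c)" by (rule Suc.IH)
  then have "St Z (N - k - 1) e rP q (D2 ((D2 ^^ k) c))" by (rule St_D2)
  then show ?case by simp
qed

lemma D0pow_St: "St Z N e (rP + k) q c \<Longrightarrow> St Z (N - k) (e - k) rP (q - 2 * k) ((D0 ^^ k) c)"
proof (induction k arbitrary: rP)
  case 0 then show ?case by simp
next
  case (Suc k)
  have "St Z N e (Suc rP + k) q c" using Suc.prems by simp
  then have "St Z (N - k) (e - k) (Suc rP) (q - 2 * k) ((D0 ^^ k) c)" by (rule Suc.IH)
  then have "St Z (N - k - 1) (e - k - 1) rP (q - 2 * k - 2) (D0 ((D0 ^^ k) c))" by (rule St_D0)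
  moreover have "q - 2 * k - 2 = q - 2 * Suc k" by simp
  ultimately show ?case by simp
qed

lemma D1pow_St: "St Z N e (rP + k) q c \<Longrightarrow> St Z (N - k) (e - k) rP (q - 2 * k) ((D1 ^^ k) c)"
proof (induction k arbitrary: rP)
  case 0 then show ?case by simp
next
  case (Suc k)
  have "St Z N e (Suc rP + k) q c" using Suc.prems by simp
  then have "St Z (N - k) (e - k) (Suc rP) (q - 2 * k) ((D1 ^^ k) c)" by (rule Suc.IH)
  then have "St Z (N - k - 1) (e - k - 1) rP (q - 2 * k - 2) (D1 ((D1 ^^ k) c))" by (rule St_D1)
  moreover have "q - 2 * k - 2 = q - 2 * Suc k" by simp
  ultimately show ?case by simp
qed

lemma D0pow_coeff: "((D0 ^^ k) c i j l = 0) \<longleftrightarrow> c (i + k) j l = 0"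
  by (induction k arbitrary: i) (auto simp: D0_def simp del: of_nat_Suc)
lemma D1pow_coeff: "((D1 ^^ k) c i j l = 0) \<longleftrightarrow> c i (j + k) l = 0"
  by (induction k arbitrary: j) (auto simp: D1_def simp del: of_nat_Suc)
lemma D2pow_coeff: "((D2 ^^ k) c i j l = 0) \<longleftrightarrow> c i j (l + k) = 0"
  by (induction k arbitrary: l) (auto simp: D2_def simp del: of_nat_Suc)

lemma St_raise_many: "St Z N e rP q c \<Longrightarrow> supp N (e + n) c \<Longrightarrow> St Z N (e + n) rP q c"
proof (induction n)
  case 0 then show ?case by simp
next
  case (Suc n)
  have "supp N (e + n) c" using supp_mono[OF Suc.prems(2)] by simp
  then have "St Z N (e + n) rP q c" using Suc by simp
  then show ?case using St_raise Suc.prems(2) by simp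
qed

lemma arith_aux: "(s::nat) \<le> 6 \<Longrightarrow> 1 \<le> d \<Longrightarrow> m + (d - 1) \<le> m + 5 + d - s" by arith

lemma main_step:
  assumes St0: "St Z (3 * d) d (m + 5) (m + 5 + d) F" and nz: "nonzero_form F" and d: "1 \<le> d"
  shows "\<exists>G. nonzero_form G \<and> St Z (3 * (d - 1)) (d - 1) m (m + (d - 1)) G"
proof -
  have s: "supp (3 * d) d F" using St0 by (simp add: St_def)
  obtain i j l where Fijl: "F i j l \<noteq> 0" and sel: "(\<exists>i j l. F i j l \<noteq> 0 \<and> 2 \<le> l) \<longrightarrow> 2 \<le> l"
  proof (cases "\<exists>i j l. F i j l \<noteq> 0 \<and> 2 \<le> l")
    case True then show ?thesis using that by blast
  next
    case False then show ?thesis using that nz unfolding nonzero_form_def by blast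
  qed
  have ijl: "i + j + l = 3 * d" "d \<le> i + j" using suppD[OF s Fijl] by auto
  define a2 where "a2 = min l 3"
  define a1 where "a1 = min j (3 - a2)"
  define a0 where "a0 = 3 - a2 - a1"
  have a2l: "a2 \<le> l" and a1j: "a1 \<le> j" and a3: "a0 + a1 + a2 = 3"
    by (auto simp: a0_def a1_def a2_def)
  have a0i: "a0 \<le> i"
    using ijl d unfolding a0_def a1_def a2_def by (simp add: min_def) arith
  define G where "G = (D0 ^^ a0) ((D1 ^^ a1) ((D2 ^^ a2) F))"
  have nzG: "nonzero_form G"
  proof -
    have "G (i - a0) (j - a1) (l - a2) \<noteq> 0"
      unfolding G_def D0pow_coeff D1pow_coeff D2pow_coeff using a0i a1j a2l Fijl by simp
    then show ?thesis unfolding nonzero_form_def by blast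
  qed
  have St1: "St Z (3 * d - a2) d (m + 5 - a2) (m + 5 + d) ((D2 ^^ a2) F)"
    using D2pow_St[of Z "3 * d" d "m + 5 - a2" a2 "m + 5 + d" F] St0 a3 by simp
  have St2: "St Z (3 * d - a2 - a1) (d - a1) (m + 5 - a2 - a1) (m + 5 + d - 2 * a1) ((D1 ^^ a1) ((D2 ^^ a2) F))"
    using D1pow_St[of Z "3 * d - a2" d "m + 5 - a2 - a1" a1 "m + 5 + d" "(D2 ^^ a2) F"] St1 a3 by simp
  have St3: "St Z (3 * d - a2 - a1 - a0) (d - a1 - a0) (m + 5 - a2 - a1 - a0) (m + 5 + d - 2 * a1 - 2 * a0) G"
    using D0pow_St[of Z "3 * d - a2 - a1" "d - a1" "m + 5 - a2 - a1 - a0" a0 "m + 5 + d - 2 * a1" "(D1 ^^ a1) ((D2 ^^ a2) F)"] St2 a3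
    unfolding G_def by (simp add: diff_diff_add)
  have N3: "3 * d - a2 - a1 - a0 = 3 * (d - 1)" using a3 d by simp
  have R3: "m + 5 - a2 - a1 - a0 = m + 2" using a3 by simp
  have St4: "St Z (3 * (d - 1)) (d - a1 - a0) (m + 2) (m + 5 + d - 2 * a1 - 2 * a0) G"
    using St3 N3 R3 by simp
  consider "a0 + a1 = 0" | "a0 + a1 = 1" | "2 \<le> a0 + a1" by arith
  then have "St Z (3 * (d - 1)) (d - 1) m (m + (d - 1)) G"
  proof cases
    case 1
    then have "St Z (3 * (d - 1)) d (m + 2) (m + 5 + d) G" using St4 by simp
    then have "St Z (3 * (d - 1)) (d - 1) (m + 2) (m + 5 + d - 1) G" using St_lower d by blast
    then show ?thesis by (rule St_mono) auto
  next
    case 2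
    have q: "m + 5 + d - 2 * a1 - 2 * a0 = m + 3 + d" using 2 by arith
    have e: "d - a1 - a0 = d - 1" using 2 by arith
    have "St Z (3 * (d - 1)) (d - 1) (m + 2) (m + 3 + d) G" using St4 unfolding q e .
    then show ?thesis by (rule St_mono) auto
  next
    case 3
    then have "a2 \<le> 1" using a3 by simp
    then have "l \<le> 1" unfolding a2_def by (simp add: min_def split: if_splits)
    have noL: "\<forall>i j l'. F i j l' \<noteq> 0 \<longrightarrow> l' \<le> 1"
    proof (intro allI impI)
      fix i' j' l' assume F': "F i' j' l' \<noteq> 0"
      show "l' \<le> 1"
      proof (rule ccontr)
        assume "\<not> l' \<le> 1"
        then have "2 \<le> l'" by simp
        then have "2 \<le> l" using sel F' by blast
        then show False using \<open>l \<le> 1\<close> by simp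
      qed
    qed
    have sF: "supp (3 * d) (3 * d - 1) F"
      unfolding supp_def
    proof (intro allI impI)
      fix i j l assume "F i j l \<noteq> 0"
      then show "i + j + l = 3 * d \<and> 3 * d - 1 \<le> i + j" using noL suppD[OF s] by fastforce
    qed
    have e1: "St {} (3 * d) (3 * d - 1) (0 + a2) 0 F" using sF by (simp add: St_empty)
    have e2: "St {} (3 * d - a2) (3 * d - 1) (0 + a1) 0 ((D2 ^^ a2) F)"
      using D2pow_St[OF e1] by (simp add: St_empty)
    have e3: "St {} (3 * d - a2 - a1) (3 * d - 1 - a1) (0 + a0) 0 ((D1 ^^ a1) ((D2 ^^ a2) F))"
      using D1pow_St[OF e2] by (simp add: St_empty)
    have e4: "supp (3 * d - a2 - a1 - a0) (3 * d - 1 - a1 - a0) G"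
      using D0pow_St[OF e3] unfolding G_def by (simp add: St_empty)
    have sG: "supp (3 * (d - 1)) (d - 1) G"
      using supp_mono[OF e4[unfolded N3]] a3 d by simp
    have le: "d - a1 - a0 \<le> d - 1" using 3 by simp
    have ar: "d - a1 - a0 + (d - 1 - (d - a1 - a0)) = d - 1" using le by arith
    have sG': "supp (3 * (d - 1)) (d - a1 - a0 + (d - 1 - (d - a1 - a0))) G" unfolding ar by (rule sG)
    have "St Z (3 * (d - 1)) (d - a1 - a0 + (d - 1 - (d - a1 - a0))) (m + 2) (m + 5 + d - 2 * a1 - 2 * a0) G"
      by (rule St_raise_many[OF St4 sG'])
    then have StF: "St Z (3 * (d - 1)) (d - 1) (m + 2) (m + 5 + d - 2 * a1 - 2 * a0) G" unfolding ar .
    have qle: "m + (d - 1) \<le> m + 5 + d - 2 * a1 - 2 * a0"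
    proof -
      have k2: "2 * a1 + 2 * a0 \<le> 6" using a3 by simp
      have "m + 5 + d - 2 * a1 - 2 * a0 = m + 5 + d - (2 * a1 + 2 * a0)" by simp
      then show ?thesis using arith_aux[OF k2 d, of m] by simp
    qed
    show ?thesis by (rule St_mono[OF StF _ qle]) simp
  qed
  then show ?thesis using nzG by blast
qed



definition X0 :: "form3 \<Rightarrow> form3" where "X0 c i j l = (if i = 0 then 0 else c (i - 1) j l)"
definition X1 :: "form3 \<Rightarrow> form3" where "X1 c i j l = (if j = 0 then 0 else c i (j - 1) l)"
definition binL :: "complex \<times> complex \<times> complex \<Rightarrow> form3 \<Rightarrow> form3" where
  "binL q c i j l = fst (snd q) * X0 c i j l - fst q * X1 c i j l"
definition binF :: "nat \<Rightarrow> form3 \<Rightarrow> bool" where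
  "binF n c \<longleftrightarrow> (\<forall>i j l. c i j l \<noteq> 0 \<longrightarrow> l = 0 \<and> i + j = n)"
definition unitF :: form3 where "unitF i j l = (if i = 0 \<and> j = 0 \<and> l = 0 then 1 else 0)"
definition prodF :: "(complex \<times> complex \<times> complex) list \<Rightarrow> form3" where
  "prodF qs = foldr binL qs unitF"

lemma H3_X0:
  assumes "\<And>j l. c K j l = 0"
  shows "H3 K (X0 c) a b g p = fst p * H3 K c a b g p + (if a = 0 then 0 else H3 K c (a - 1) b g p)"
proof -
  obtain p0 p1 p2 where p: "p = (p0, p1, p2)" by (cases p) auto
  define G where "G i = (\<Sum>j\<le>K. \<Sum>l\<le>K. X0 c i j l * hmon i a p0 * hmon j b p1 * hmon l g p2)" for i
  have "H3 K (X0 c) a b g p = (\<Sum>i\<le>K. G i)" by (simp add: H3_def G_def p)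
  also have "\<dots> = (\<Sum>i\<le>K. G (Suc i))"
    by (rule sum_shift[symmetric]) (auto simp: G_def X0_def assms)
  also have "\<dots> = (\<Sum>i\<le>K. \<Sum>j\<le>K. \<Sum>l\<le>K. p0 * (c i j l * hmon i a p0 * hmon j b p1 * hmon l g p2)
        + (if a = 0 then 0 else c i j l * hmon i (a - 1) p0 * hmon j b p1 * hmon l g p2))"
    unfolding G_def
  proof (intro sum.cong refl)
    fix i j l
    show "X0 c (Suc i) j l * hmon (Suc i) a p0 * hmon j b p1 * hmon l g p2 =
      p0 * (c i j l * hmon i a p0 * hmon j b p1 * hmon l g p2)
        + (if a = 0 then 0 else c i j l * hmon i (a - 1) p0 * hmon j b p1 * hmon l g p2)"
      by (cases "a = 0") (simp_all add: X0_def h4 algebra_simps)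
  qed
  also have "\<dots> = fst p * H3 K c a b g p + (if a = 0 then 0 else H3 K c (a - 1) b g p)"
    by (cases "a = 0") (simp_all add: H3_def p sum.distrib sum_distrib_left)
  finally show ?thesis .
qed

lemma H3_X1:
  assumes "\<And>i l. c i K l = 0"
  shows "H3 K (X1 c) a b g p = fst (snd p) * H3 K c a b g p + (if b = 0 then 0 else H3 K c a (b - 1) g p)"
proof -
  obtain p0 p1 p2 where p: "p = (p0, p1, p2)" by (cases p) auto
  define G where "G i j = (\<Sum>l\<le>K. X1 c i j l * hmon i a p0 * hmon j b p1 * hmon l g p2)" for i j
  have "H3 K (X1 c) a b g p = (\<Sum>i\<le>K. \<Sum>j\<le>K. G i j)" by (simp add: H3_def G_def p)
  also have "\<dots> = (\<Sum>i\<le>K. \<Sum>j\<le>K. G i (Suc j))"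
    by (intro sum.cong refl sum_shift[symmetric]) (auto simp: G_def X1_def assms)
  also have "\<dots> = (\<Sum>i\<le>K. \<Sum>j\<le>K. \<Sum>l\<le>K. p1 * (c i j l * hmon i a p0 * hmon j b p1 * hmon l g p2)
        + (if b = 0 then 0 else c i j l * hmon i a p0 * hmon j (b - 1) p1 * hmon l g p2))"
    unfolding G_def
  proof (intro sum.cong refl)
    fix i j l
    show "X1 c i (Suc j) l * hmon i a p0 * hmon (Suc j) b p1 * hmon l g p2 =
      p1 * (c i j l * hmon i a p0 * hmon j b p1 * hmon l g p2)
        + (if b = 0 then 0 else c i j l * hmon i a p0 * hmon j (b - 1) p1 * hmon l g p2)"
      by (cases "b = 0") (simp_all add: X1_def h4 algebra_simps)
  qed
  also have "\<dots> = fst (snd p) * H3 K c a b g p + (if b = 0 then 0 else H3 K c a (b - 1) g p)"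
    by (cases "b = 0") (simp_all add: H3_def p sum.distrib sum_distrib_left)
  finally show ?thesis .
qed

lemma H3_lin: "H3 K (\<lambda>i j l. x * f i j l - y * h i j l) a b g p = x * H3 K f a b g p - y * H3 K h a b g p"
  by (simp add: H3_def algebra_simps sum_subtractf sum_distrib_left)

lemma binF_bound: "binF n c \<Longrightarrow> c i j l \<noteq> 0 \<Longrightarrow> i \<le> n \<and> j \<le> n \<and> l \<le> n"
  unfolding binF_def by fastforce

lemma binL_P2:
  assumes bf: "binF n c" and h: "mult_ge_P2 n c p r"
  shows "mult_ge_P2 (Suc n) (binL q c) p (if fst (snd q) * fst p - fst q * fst (snd p) = 0 then Suc r else r)"
proof -
  define H where "H a b g = H3 n c a b g p" for a b g
  have rg: "H3 (Suc n) c a b g p = H a b g" for a b g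
    unfolding H_def by (rule H3_range) (auto dest: binF_bound[OF bf])
  have z0: "c (Suc n) j l = 0" for j l using binF_bound[OF bf, of "Suc n" j l] by auto
  have z1: "c i (Suc n) l = 0" for i l using binF_bound[OF bf, of i "Suc n" l] by auto
  have eq: "H3 (Suc n) (binL q c) a b g p = (fst (snd q) * fst p - fst q * fst (snd p)) * H a b g
     + fst (snd q) * (if a = 0 then 0 else H (a - 1) b g) - fst q * (if b = 0 then 0 else H a (b - 1) g)" for a b g
  proof -
    have "binL q c = (\<lambda>i j l. fst (snd q) * X0 c i j l - fst q * X1 c i j l)"
      by (simp add: fun_eq_iff binL_def)
    then show ?thesis
      by (simp add: H3_lin H3_X0[of c "Suc n", OF z0] H3_X1[of c "Suc n", OF z1] rg algebra_simps)
  qed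
  have hz: "H a b g = 0" if "a + b + g < r" for a b g
    using h that unfolding P2_H3 H_def by blast
  show ?thesis unfolding P2_H3
  proof (intro allI impI)
    fix a b g
    assume lt: "a + b + g < (if fst (snd q) * fst p - fst q * fst (snd p) = 0 then Suc r else r)"
    have t2: "(if a = 0 then 0 else H (a - 1) b g) = 0" using lt hz[of "a - 1" b g] by (auto split: if_splits)
    have t3: "(if b = 0 then 0 else H a (b - 1) g) = 0" using lt hz[of a "b - 1" g] by (auto split: if_splits)
    have t1: "(fst (snd q) * fst p - fst q * fst (snd p)) * H a b g = 0"
      using lt hz[of a b g] by (auto split: if_splits)
    show "H3 (Suc n) (binL q c) a b g p = 0" unfolding eq t1 t2 t3 by simp
  qed
qed

lemma binF_binL: "binF n c \<Longrightarrow> binF (Suc n) (binL q c)"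
proof -
  assume bf: "binF n c"
  show ?thesis unfolding binF_def
  proof (intro allI impI)
    fix i j l assume h: "binL q c i j l \<noteq> 0"
    then have "X0 c i j l \<noteq> 0 \<or> X1 c i j l \<noteq> 0" by (auto simp: binL_def)
    then show "l = 0 \<and> i + j = Suc n"
    proof
      assume "X0 c i j l \<noteq> 0"
      then have "i \<noteq> 0" "c (i - 1) j l \<noteq> 0" by (auto simp: X0_def split: if_splits)
      then show ?thesis using bf unfolding binF_def by fastforce
    next
      assume "X1 c i j l \<noteq> 0"
      then have "j \<noteq> 0" "c i (j - 1) l \<noteq> 0" by (auto simp: X1_def split: if_splits)
      then show ?thesis using bf unfolding binF_def by fastforce
    qed
  qed
qed

lemma nz_binL:
  assumes bf: "binF n c" and nz: "nonzero_form c" and q: "(fst q, fst (snd q)) \<noteq> (0, 0)"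
  shows "nonzero_form (binL q c)"
proof (cases "fst q = 0")
  case True
  then have q1: "fst (snd q) \<noteq> 0" using q by auto
  obtain i j l where "c i j l \<noteq> 0" using nz unfolding nonzero_form_def by blast
  then have "binL q c (Suc i) j l \<noteq> 0" using True q1 by (simp add: binL_def X0_def X1_def)
  then show ?thesis unfolding nonzero_form_def by blast
next
  case False
  define J where "J = {j. \<exists>i l. c i j l \<noteq> 0}"
  have fJ: "finite J" unfolding J_def
    by (rule finite_subset[of _ "{..n}"]) (auto dest: binF_bound[OF bf])
  have neJ: "J \<noteq> {}" using nz unfolding J_def nonzero_form_def by blast
  define jm where "jm = Max J"
  have "jm \<in> J" unfolding jm_def using fJ neJ by simp
  then obtain i l where cil: "c i jm l \<noteq> 0" unfolding J_def by blast
  have "Suc jm \<notin> J" unfolding jm_def using fJ neJ Max_ge not_less_eq_eq by blast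
  then have z: "c i' (Suc jm) l' = 0" for i' l' unfolding J_def by blast
  have "binL q c i (Suc jm) l = - fst q * c i jm l" by (simp add: binL_def X0_def X1_def z)
  then have "binL q c i (Suc jm) l \<noteq> 0" using False cil by simp
  then show ?thesis unfolding nonzero_form_def by blast
qed

lemma prodF_binF: "binF (length qs) (prodF qs)"
proof (induction qs)
  case Nil then show ?case by (simp add: prodF_def binF_def unitF_def)
next
  case (Cons q qs) then show ?case using binF_binL[OF Cons.IH, of q] by (simp add: prodF_def)
qed

lemma prodF_nz: "(\<forall>q\<in>set qs. (fst q, fst (snd q)) \<noteq> (0, 0)) \<Longrightarrow> nonzero_form (prodF qs)"
proof (induction qs)
  case Nil
  have "unitF 0 0 0 \<noteq> 0" by (simp add: unitF_def)
  then show ?case unfolding prodF_def nonzero_form_def by auto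
next
  case (Cons q qs)
  have "nonzero_form (binL q (prodF qs))"
    by (rule nz_binL[OF prodF_binF]) (use Cons in auto)
  then show ?case by (simp add: prodF_def)
qed

lemma prodF_P2: "mult_ge_P2 (length qs) (prodF qs) p
   (length (filter (\<lambda>q. fst (snd q) * fst p - fst q * fst (snd p) = 0) qs))"
proof (induction qs)
  case Nil
  then show ?case by (simp add: mult_ge_P2_def)
next
  case (Cons q qs)
  have "mult_ge_P2 (Suc (length qs)) (binL q (prodF qs)) p
     (if fst (snd q) * fst p - fst q * fst (snd p) = 0 then Suc (length (filter (\<lambda>q. fst (snd q) * fst p - fst q * fst (snd p) = 0) qs))
      else length (filter (\<lambda>q. fst (snd q) * fst p - fst q * fst (snd p) = 0) qs))"
    by (rule binL_P2[OF prodF_binF Cons.IH])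
  then show ?case by (cases "fst (snd q) * fst p - fst q * fst (snd p) = 0") (simp_all add: prodF_def)
qed

lemma binF_E:
  assumes bf: "binF (3 * d) c" and r: "r \<le> 2 * d"
  shows "mult_ge_E d c w r"
proof -
  have t1: "c i j l * hmon (i + j - d) a 0 = 0" if "a < 2 * d" for i j l a
  proof (cases "c i j l = 0")
    case False
    then have "i + j = 3 * d" using bf unfolding binF_def by blast
    then show ?thesis using that by (simp add: hmon_at0)
  qed simp
  show ?thesis unfolding mult_ge_E_def
  proof (cases "fst w \<noteq> 0")
    case True
    show "if fst w \<noteq> 0 then \<forall>a b. a + b < r \<longrightarrow> (\<Sum>i\<le>3 * d. \<Sum>j\<le>3 * d. \<Sum>l\<le>3 * d. c i j l * hmon (i + j - d) a 0 * hmon j b (snd w / fst w)) = 0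
          else \<forall>a b. a + b < r \<longrightarrow> (\<Sum>i\<le>3 * d. \<Sum>j\<le>3 * d. \<Sum>l\<le>3 * d. c i j l * hmon i a (fst w / snd w) * hmon (i + j - d) b 0) = 0"
      using True r by (auto simp: t1)
  next
    case False
    have t2: "c i j l * hmon i a s * hmon (i + j - d) b 0 = 0" if "b < 2 * d" for i j l a b s
      using t1[OF that, of i j l] by (simp add: mult_ac)
    show "if fst w \<noteq> 0 then \<forall>a b. a + b < r \<longrightarrow> (\<Sum>i\<le>3 * d. \<Sum>j\<le>3 * d. \<Sum>l\<le>3 * d. c i j l * hmon (i + j - d) a 0 * hmon j b (snd w / fst w)) = 0
          else \<forall>a b. a + b < r \<longrightarrow> (\<Sum>i\<le>3 * d. \<Sum>j\<le>3 * d. \<Sum>l\<le>3 * d. c i j l * hmon i a (fst w / snd w) * hmon (i + j - d) b 0) = 0"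
      using False r by (auto simp: t2)
  qed
qed

lemma filter_concat_ge: "x \<in> set xs \<Longrightarrow> length (filter P (f x)) \<le> length (filter P (concat (map f xs)))"
  by (induction xs) auto

lemma exists_form:
  assumes fin: "finite Z" and val: "\<forall>z\<in>Z. valid_pt z"
  shows "\<exists>d c. in_linsys d c \<and> nonzero_form c \<and> (\<forall>z\<in>Z. mult_ge d c z M)"
proof -
  obtain zs where zs: "set zs = Z" using finite_list[OF fin] by blast
  define f where "f z = (case z of Off p \<Rightarrow> replicate M p | OnE w \<Rightarrow> [])" for z
  define qs0 where "qs0 = concat (map f zs)"
  define d where "d = length qs0 + M"
  define qs where "qs = qs0 @ replicate (3 * d - length qs0) (0, 1, 0)"
  define c where "c = prodF qs"
  have len: "length qs = 3 * d" unfolding qs_def d_def by simp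
  have bf: "binF (3 * d) c" unfolding c_def using prodF_binF[of qs] len by simp
  have lin: "in_linsys d c"
    unfolding in_linsys_def using bf unfolding binF_def by auto
  have qv: "\<forall>q\<in>set qs. (fst q, fst (snd q)) \<noteq> (0, 0)"
  proof
    fix q assume "q \<in> set qs"
    then consider "q \<in> set qs0" | "q = (0, 1, 0)" unfolding qs_def by (auto split: if_splits)
    then show "(fst q, fst (snd q)) \<noteq> (0, 0)"
    proof cases
      case 1
      then obtain z where z: "z \<in> Z" "q \<in> set (f z)" unfolding qs0_def using zs by auto
      then obtain p where "z = Off p" "q = p" unfolding f_def by (cases z) (auto split: if_splits)
      then show ?thesis using val z by (cases q) auto
    qed simp
  qed
  have nz: "nonzero_form c" unfolding c_def by (rule prodF_nz[OF qv])
  have mz: "mult_ge d c z M" if z: "z \<in> Z" for z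
  proof (cases z)
    case (Off p)
    define P where "P q = (fst (snd q) * fst p - fst q * fst (snd p) = 0)" for q :: "complex \<times> complex \<times> complex"
    have "length (filter P (f z)) \<le> length (filter P qs0)"
      unfolding qs0_def by (rule filter_concat_ge) (use z zs in auto)
    moreover have "length (filter P (f z)) = M"
      using Off by (simp add: f_def P_def mult.commute)
    moreover have "length (filter P qs0) \<le> length (filter P qs)" unfolding qs_def by simp
    ultimately have ge: "M \<le> length (filter P qs)" by simp
    have "mult_ge_P2 (3 * d) c p (length (filter P qs))"
      using prodF_P2[of qs p] len unfolding c_def P_def by simp
    then show ?thesis using Off P2_mono[OF _ ge] by simp
  next
    case (OnE w)
    then show ?thesis using binF_E[OF bf, of M w] by (simp add: d_def)
  qed
  show ?thesis using lin nz mz by blast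
qed

theorem corollary3:
  fixes Z :: "s1pt set" and m :: nat
  assumes "finite Z" and "Z \<noteq> {}" and "\<forall>z\<in>Z. valid_pt z" and "m \<ge> 1"
  shows "alpha_S1 m Z < alpha_S1 (m + 5) Z"
proof -
  define P where "P r d \<longleftrightarrow> (\<exists>c. in_linsys d c \<and> nonzero_form c \<and> (\<forall>z\<in>Z. mult_ge d c z r))" for r d
  have alpha: "alpha_S1 r Z = (LEAST d. P r d)" for r by (simp add: alpha_S1_def P_def)
  obtain d0 where "P (m + 5) d0" using exists_form[OF assms(1) assms(3)] unfolding P_def by blast
  define d' where "d' = (LEAST d. P (m + 5) d)"
  have Pd: "P (m + 5) d'" unfolding d'_def by (rule LeastI) fact
  then obtain F where lin: "in_linsys d' F" and nz: "nonzero_form F" and mF: "\<forall>z\<in>Z. mult_ge d' F z (m + 5)"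
    unfolding P_def by blast
  have d1: "1 \<le> d'"
  proof (rule ccontr)
    assume "\<not> 1 \<le> d'"
    then have d0: "d' = 0" by simp
    have F0: "F i j l = 0" if "(i, j, l) \<noteq> (0, 0, 0)" for i j l
      using lin that d0 unfolding in_linsys_def by auto
    have F000: "F 0 0 0 \<noteq> 0"
    proof -
      obtain i j l where "F i j l \<noteq> 0" using nz unfolding nonzero_form_def by blast
      then show ?thesis using F0 by (cases "(i, j, l) = (0, 0, 0)") auto
    qed
    obtain z where z: "z \<in> Z" using assms(2) by blast
    have mz: "mult_ge 0 F z (m + 5)" using mF z d0 by simp
    show False
    proof (cases z)
      case (Off p)
      then have "mult_ge_P2 0 F p (m + 5)" using mz by simp
      moreover have "(0::nat) + 0 + 0 < m + 5" by simp
      ultimately have "(\<Sum>i\<le>0. \<Sum>j\<le>0. \<Sum>l\<le>0. F i j l * hmon i 0 (fst p) * hmon j 0 (fst (snd p)) * hmon l 0 (snd (snd p))) = 0"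
        unfolding mult_ge_P2_def by blast
      then show False using F000 by (simp add: hmon_def)
    next
      case (OnE w)
      then have "mult_ge_E 0 F w (m + 5)" using mz by simp
      then have "F 0 0 0 = 0" unfolding mult_ge_E_def
        apply (simp add: hmon_def split: if_splits)
        apply (drule spec[of _ 0], drule spec[of _ 0], simp)+
        done
      then show False using F000 by simp
    qed
  qed
  have St0: "St Z (3 * d') d' (m + 5) (m + 5 + d') F"
    unfolding St_def
  proof (intro conjI ballI)
    show "supp (3 * d') d' F" using lin by (simp add: in_linsys_def supp_def)
    fix z assume z: "z \<in> Z"
    then have "mult_ge d' F z (m + 5)" using mF by blast
    then show "case z of Off p \<Rightarrow> mult_ge_P2 (3 * d') F p (m + 5) | OnE w \<Rightarrow> Econd (3 * d') d' F w (m + 5 + d' - d')"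
      by (cases z) (simp_all add: E_equiv)
  qed
  obtain G where nzG: "nonzero_form G" and StG: "St Z (3 * (d' - 1)) (d' - 1) m (m + (d' - 1)) G"
    using main_step[OF St0 nz d1] by blast
  have "P m (d' - 1)"
    unfolding P_def
  proof (intro exI conjI ballI)
    show "in_linsys (d' - 1) G" using StG by (simp add: St_def in_linsys_def supp_def)
    show "nonzero_form G" by fact
    fix z assume z: "z \<in> Z"
    then have "case z of Off p \<Rightarrow> mult_ge_P2 (3 * (d' - 1)) G p m | OnE w \<Rightarrow> Econd (3 * (d' - 1)) (d' - 1) G w (m + (d' - 1) - (d' - 1))"
      using StG unfolding St_def by blast
    then show "mult_ge (d' - 1) G z m" by (cases z) (simp_all add: E_equiv)
  qed
  then have "(LEAST d. P m d) \<le> d' - 1" by (rule Least_le)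
  then show ?thesis unfolding alpha d'_def[symmetric] using d1 by simp
qed


end
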